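(* Let $p\in(0,\infty)$, $\omega^0\in\mathbb Z^V$, let $\gamma\subset V$ be a finite nonempty connected set, and let $\omega\in\mathbb Z^V$ satisfy $\omega_v\neq\omega^0_v$ for $v\in\gamma$ and $\omega_v=\omega^0_v$ for $v\notin\gamma$. Let $E_\gamma$ denote the set of edges of $\mathcal T^d$ having at least one endpoint in $\gamma$. Then $$H(\omega)-H(\omega^0):=\sum_{\{v,w\}\in E_\gamma}\Bigl(|\omega_v-\omega_w|^p-|\omega^0_v-\omega^0_w|^p\Bigr)\ \ge\ (dc_p^2-1)\sum_{v\in\gamma}|\omega_v-\omega^0_v|^p-(c_p+1)\sum_{\{v,w\}\in E_\gamma}|\omega^0_v-\omega^0_w|^p,$$ where $c_p=\min\{2^{1-p},1\}$.
   Context: $\mathcal T^d=(V,E)$ is the Cayley tree of order $d\ge2$ (every vertex has $d+1$ neighbours). The excess energy $H(\omega)-H(\omega^0)$ of the $p$-SOS model (edge energy $|\omega_v-\omega_w|^p$) for two configurations differing on finitely many sites is the (finite) sum over edges of the differences of edge energies, which equals the sum over $E_\gamma$ in the claim. *)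

theory Defs
  imports Complex_Main
begin

text \<open>Cayley tree of order d: the Cayley graph of the free product of d+1 copies of Z/2.
  Vertices are reduced words over the letters 0..d (no two consecutive equal letters);
  the empty word is the root; the neighbours of a word xs are a#xs (a \<noteq> hd xs) and tl xs.
  Every vertex has exactly d+1 neighbours.\<close>

definition cayley_V :: "nat \<Rightarrow> nat list set" where
  "cayley_V d = {xs. set xs \<subseteq> {..d} \<and> successively (\<noteq>) xs}"

definition tree_adj :: "nat \<Rightarrow> nat list \<Rightarrow> nat list \<Rightarrow> bool" where
  "tree_adj d v w \<longleftrightarrow> v \<in> cayley_V d \<and> w \<in> cayley_V d \<and> (\<exists>a. v = a # w \<or> w = a # v)"

text \<open>Each undirected edge {v,w} is represented exactly once by the oriented pair (child, parent),
  i.e. (a#w, w).\<close>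
definition tree_edges :: "nat \<Rightarrow> (nat list \<times> nat list) set" where
  "tree_edges d = {(v, w). tree_adj d v w \<and> v \<noteq> [] \<and> tl v = w}"

definition E_gamma :: "nat \<Rightarrow> nat list set \<Rightarrow> (nat list \<times> nat list) set" where
  "E_gamma d \<gamma> = {(v, w) \<in> tree_edges d. v \<in> \<gamma> \<or> w \<in> \<gamma>}"

definition tree_connected :: "nat \<Rightarrow> nat list set \<Rightarrow> bool" where
  "tree_connected d \<gamma> \<longleftrightarrow>
     (\<forall>u\<in>\<gamma>. \<forall>v\<in>\<gamma>. (\<lambda>x y. x \<in> \<gamma> \<and> y \<in> \<gamma> \<and> tree_adj d x y)\<^sup>*\<^sup>* u v)"

definition c_p :: "real \<Rightarrow> real" where
  "c_p p = min (2 powr (1 - p)) 1"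

end

theory Submission imports Defs "HOL-Analysis.Analysis" begin

lemma sub_add_powr:
  fixes a b p :: real assumes "0 \<le> a" "0 \<le> b" "0 < p" "p \<le> 1"
  shows "(a+b) powr p \<le> a powr p + b powr p"
proof (cases "a + b = 0")
  case True then show ?thesis using assms by simp
next
  case False
  then have s: "a + b > 0" using assms by simp
  define t where "t = a/(a+b)"
  have t0: "0 \<le> t" "t \<le> 1" using assms s by (auto simp: t_def)
  have 1: "1 - t = b/(a+b)" using s by (simp add: t_def field_simps)
  have "t \<le> t powr p" using powr_mono'[of p 1 t] t0 assms by simp
  moreover have "1 - t \<le> (1-t) powr p" using powr_mono'[of p 1 "1-t"] t0 assms by simp
  ultimately have "1 \<le> t powr p + (1-t) powr p" by simp
  hence "(a+b) powr p * 1 \<le> (a+b) powr p * (t powr p + (1-t) powr p)"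
    by (intro mult_left_mono) auto
  also have "\<dots> = a powr p + b powr p"
  proof -
    have "t powr p = a powr p / (a+b) powr p" unfolding t_def using s assms by (simp add: powr_divide)
    moreover have "(1-t) powr p = b powr p / (a+b) powr p" unfolding 1 using s assms by (simp add: powr_divide)
    ultimately show ?thesis using s by (simp add: distrib_left)
  qed
  finally show ?thesis by simp
qed

lemma convex_add_powr:
  fixes a b p :: real assumes "0 \<le> a" "0 \<le> b" "1 \<le> p"
  shows "(a+b) powr p \<le> 2 powr (p-1) * (a powr p + b powr p)"
proof -
  have g: "1 \<le> (2::real) powr (p-1)" using assms by (simp add: ge_one_powr_ge_zero)
  consider "a = 0" | "b = 0" | "a > 0" "b > 0" using assms by linarith
  then show ?thesis
  proof cases
    case 1 then show ?thesis using g assms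
      by (simp add: mult_le_cancel_right1)
  next
    case 2 then show ?thesis using g assms
      by (simp add: mult_le_cancel_right1)
  next
    case 3
    have "((1 - 1/2) *\<^sub>R a + (1/2) *\<^sub>R b) powr p \<le> (1 - 1/2) * a powr p + (1/2) * b powr p"
      using convex_onD[OF powr_convex[OF assms(3)], of "1/2" a b] 3 by simp
    hence h: "((a+b)/2) powr p \<le> (a powr p + b powr p)/2" by (simp add: field_simps)
    have "(a+b) powr p = 2 powr p * ((a+b)/2) powr p"
      using 3 by (simp add: powr_divide)
    also have "\<dots> \<le> 2 powr p * ((a powr p + b powr p)/2)"
      using h by (intro mult_left_mono) auto
    also have "\<dots> = 2 powr (p-1) * (a powr p + b powr p)"
      by (simp add: powr_diff)
    finally show ?thesis .
  qed
qed

lemma key: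
  fixes x y p :: real assumes "0 < p"
  shows "min (2 powr (1 - p)) 1 * \<bar>x - y\<bar> powr p \<le> \<bar>x\<bar> powr p + \<bar>y\<bar> powr p"
proof -
  have tri: "\<bar>x - y\<bar> powr p \<le> (\<bar>x\<bar> + \<bar>y\<bar>) powr p"
    using assms by (intro powr_mono2) auto
  show ?thesis
  proof (cases "p \<le> 1")
    case True
    have "min (2 powr (1 - p)) 1 * \<bar>x - y\<bar> powr p \<le> \<bar>x - y\<bar> powr p"
      by (rule mult_left_le_one_le) auto
    also note tri
    also have "(\<bar>x\<bar> + \<bar>y\<bar>) powr p \<le> \<bar>x\<bar> powr p + \<bar>y\<bar> powr p"
      using sub_add_powr[of "\<bar>x\<bar>" "\<bar>y\<bar>" p] assms True by simp
    finally show ?thesis .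
  next
    case False
    have m: "min (2 powr (1 - p)) 1 = 2 powr (1-p)" using False powr_mono[of "1-p" 0 "2::real"]
      by (simp add: min_def)
    have i: "2 powr (1-p) * 2 powr (p-1) = (1::real)"
      by (simp flip: powr_add)
    have "2 powr (1-p) * \<bar>x - y\<bar> powr p \<le> 2 powr (1-p) * (2 powr (p-1) * (\<bar>x\<bar> powr p + \<bar>y\<bar> powr p))"
      using tri convex_add_powr[of "\<bar>x\<bar>" "\<bar>y\<bar>" p] False
      by (intro mult_left_mono) auto
    also have "\<dots> = \<bar>x\<bar> powr p + \<bar>y\<bar> powr p" using i by (simp flip: mult.assoc)
    finally show ?thesis using m by simp
  qed
qed
lemma edge_ineq:
  fixes p c :: real and \<omega> \<omega>0 :: "'a \<Rightarrow> int"
  assumes p: "0 < p" and c: "c = min (2 powr (1 - p)) 1"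
  shows "c^2 * \<bar>real_of_int (\<omega> f - \<omega>0 f)\<bar> powr p \<le> \<bar>real_of_int (\<omega> f - \<omega> t)\<bar> powr p
     + \<bar>real_of_int (\<omega> t - \<omega>0 t)\<bar> powr p + c * \<bar>real_of_int (\<omega>0 f - \<omega>0 t)\<bar> powr p"
proof -
  define X where "X = real_of_int (\<omega> f - \<omega>0 t)"
  have c0: "0 \<le> c" using c by simp
  have 1: "c * \<bar>X\<bar> powr p \<le> \<bar>real_of_int (\<omega> f - \<omega> t)\<bar> powr p + \<bar>real_of_int (\<omega> t - \<omega>0 t)\<bar> powr p"
    using key[OF p, of "real_of_int (\<omega> f - \<omega> t)" "real_of_int (\<omega>0 t - \<omega> t)"] c
    by (simp add: X_def abs_minus_commute)
  have 2: "c * \<bar>real_of_int (\<omega> f - \<omega>0 f)\<bar> powr p \<le> \<bar>X\<bar> powr p + \<bar>real_of_int (\<omega>0 f - \<omega>0 t)\<bar> powr p"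
    using key[OF p, of X "real_of_int (\<omega>0 f - \<omega>0 t)"] c by (simp add: X_def)
  have "c^2 * \<bar>real_of_int (\<omega> f - \<omega>0 f)\<bar> powr p = c * (c * \<bar>real_of_int (\<omega> f - \<omega>0 f)\<bar> powr p)"
    by (simp add: power2_eq_square)
  also have "\<dots> \<le> c * (\<bar>X\<bar> powr p + \<bar>real_of_int (\<omega>0 f - \<omega>0 t)\<bar> powr p)"
    using 2 c0 by (rule mult_left_mono)
  also have "\<dots> = c * \<bar>X\<bar> powr p + c * \<bar>real_of_int (\<omega>0 f - \<omega>0 t)\<bar> powr p"
    by (simp add: distrib_left)
  finally show ?thesis using 1 by linarith
qed

lemma cons_in_V:
  assumes "w \<in> cayley_V d" "a \<le> d" "w = [] \<or> a \<noteq> hd w"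
  shows "a # w \<in> cayley_V d"
  using assms by (cases w) (auto simp: cayley_V_def)

lemma E_finite:
  assumes "finite \<gamma>"
  shows "finite (E_gamma d \<gamma>)"
proof -
  have "E_gamma d \<gamma> \<subseteq> (\<lambda>v. (v, tl v)) ` \<gamma> \<union> (\<lambda>(w,a). (a#w, w)) ` (\<gamma> \<times> {..d})"
  proof
    fix e assume e: "e \<in> E_gamma d \<gamma>"
    obtain v w where ev: "e = (v,w)" by (cases e)
    from e ev have E: "tree_adj d v w" "v \<noteq> []" "tl v = w" "v \<in> \<gamma> \<or> w \<in> \<gamma>"
      by (auto simp: E_gamma_def tree_edges_def)
    show "e \<in> (\<lambda>v. (v, tl v)) ` \<gamma> \<union> (\<lambda>(w,a). (a#w, w)) ` (\<gamma> \<times> {..d})"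
    proof (cases "v \<in> \<gamma>")
      case True then show ?thesis using E ev by auto
    next
      case False
      then have w: "w \<in> \<gamma>" using E by auto
      have v: "v = hd v # w" using E by (cases v) auto
      have "hd v \<le> d" using E(1,2) by (cases v) (auto simp: tree_adj_def cayley_V_def)
      then have "(w, hd v) \<in> \<gamma> \<times> {..d}" using w by auto
      then show ?thesis using ev v by (auto intro!: image_eqI[where x="(w, hd v)"])
    qed
  qed
  moreover have "finite ((\<lambda>v. (v, tl v)) ` \<gamma> \<union> (\<lambda>(w,a). (a#w, w)) ` (\<gamma> \<times> {..d}))"
    using assms by auto
  ultimately show ?thesis by (rule finite_subset)
qed

theorem lemma1:
  fixes d :: nat and p :: real and \<omega>0 \<omega> :: "nat list \<Rightarrow> int" and \<gamma> :: "nat list set"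
  assumes "d \<ge> 2" and "p > 0"
    and "\<gamma> \<subseteq> cayley_V d" and "finite \<gamma>" and "\<gamma> \<noteq> {}" and "tree_connected d \<gamma>"
    and "\<And>v. v \<in> \<gamma> \<Longrightarrow> \<omega> v \<noteq> \<omega>0 v"
    and "\<And>v. v \<in> cayley_V d \<Longrightarrow> v \<notin> \<gamma> \<Longrightarrow> \<omega> v = \<omega>0 v"
  shows "(\<Sum>(v, w)\<in>E_gamma d \<gamma>.
            \<bar>real_of_int (\<omega> v - \<omega> w)\<bar> powr p - \<bar>real_of_int (\<omega>0 v - \<omega>0 w)\<bar> powr p)
         \<ge> (real d * (c_p p)\<^sup>2 - 1) * (\<Sum>v\<in>\<gamma>. \<bar>real_of_int (\<omega> v - \<omega>0 v)\<bar> powr p)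
           - (c_p p + 1) * (\<Sum>(v, w)\<in>E_gamma d \<gamma>. \<bar>real_of_int (\<omega>0 v - \<omega>0 w)\<bar> powr p)"
proof -
  note V = assms(3)
  define c where "c = c_p p"
  have c0: "0 \<le> c" by (simp add: c_def c_p_def)
  define D where "D v = \<bar>real_of_int (\<omega> v - \<omega>0 v)\<bar> powr p" for v
  define T where "T e = (case e of (v,w) \<Rightarrow> \<bar>real_of_int (\<omega> v - \<omega> w)\<bar> powr p)" for e
  define A where "A e = (case e of (v,w) \<Rightarrow> \<bar>real_of_int (\<omega>0 v - \<omega>0 w)\<bar> powr p)" for e
  define fr where "fr e = (if snd e \<in> \<gamma> then snd e else fst e)" for e :: "nat list \<times> nat list"
  define to where "to e = (if snd e \<in> \<gamma> then fst e else snd e)" for e :: "nat list \<times> nat list"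
  define E where "E = E_gamma d \<gamma>"
  have finE: "finite E" unfolding E_def using E_finite[OF assms(4)] .
  have Dnn: "0 \<le> D v" for v by (simp add: D_def)
  have Dout: "D v = 0" if "v \<in> cayley_V d" "v \<notin> \<gamma>" for v
    using assms(8)[OF that] by (simp add: D_def)
  have Eprop: "tree_adj d v w \<and> v \<noteq> [] \<and> tl v = w \<and> (v \<in> \<gamma> \<or> w \<in> \<gamma>)" if "(v,w) \<in> E" for v w
    using that by (auto simp: E_def E_gamma_def tree_edges_def)
  have edge: "T e - A e \<ge> c^2 * D (fr e) - D (to e) - (c+1) * A e" if "e \<in> E" for e
  proof -
    obtain v w where ev: "e = (v,w)" by (cases e)
    show ?thesis
    proof (cases "w \<in> \<gamma>")
      case True
      have "c^2 * D w \<le> \<bar>real_of_int (\<omega> w - \<omega> v)\<bar> powr p + D v + c * \<bar>real_of_int (\<omega>0 w - \<omega>0 v)\<bar> powr p"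
        using edge_ineq[OF assms(2) refl, where \<omega>=\<omega> and \<omega>0=\<omega>0 and f=w and t=v] by (simp add: c_def c_p_def D_def)
      then show ?thesis using True ev
        by (simp add: fr_def to_def T_def A_def abs_minus_commute algebra_simps)
    next
      case False
      have "c^2 * D v \<le> \<bar>real_of_int (\<omega> v - \<omega> w)\<bar> powr p + D w + c * \<bar>real_of_int (\<omega>0 v - \<omega>0 w)\<bar> powr p"
        using edge_ineq[OF assms(2) refl, where \<omega>=\<omega> and \<omega>0=\<omega>0 and f=v and t=w] by (simp add: c_def c_p_def D_def)
      then show ?thesis using False ev
        by (simp add: fr_def to_def T_def A_def algebra_simps)
    qed
  qed
  have sum_to: "(\<Sum>e\<in>E. D (to e)) \<le> (\<Sum>v\<in>\<gamma>. D v)"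
  proof -
    define E' where "E' = {e\<in>E. to e \<in> \<gamma>}"
    have "(\<Sum>e\<in>E. D (to e)) = (\<Sum>e\<in>E'. D (to e))"
    proof (rule sum.mono_neutral_right[OF finE])
      show "E' \<subseteq> E" by (auto simp: E'_def)
      show "\<forall>e\<in>E - E'. D (to e) = 0"
      proof
        fix e assume e: "e \<in> E - E'"
        obtain v w where ev: "e = (v,w)" by (cases e)
        have "v \<in> cayley_V d" "w \<in> cayley_V d" using Eprop[of v w] e ev by (auto simp: tree_adj_def)
        then show "D (to e) = 0" using e ev Dout by (auto simp: E'_def to_def)
      qed
    qed
    also have "\<dots> = (\<Sum>v\<in>to ` E'. D v)"
    proof -
      have "inj_on to E'"
      proof (rule inj_onI)
        fix e1 e2 assume a: "e1 \<in> E'" "e2 \<in> E'" "to e1 = to e2"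
        obtain v1 w1 where 1: "e1 = (v1,w1)" by (cases e1)
        obtain v2 w2 where 2: "e2 = (v2,w2)" by (cases e2)
        have "to e1 = v1" "to e2 = v2" using a 1 2 by (auto simp: E'_def to_def)
        moreover have "tl v1 = w1" "tl v2 = w2" using a 1 2 Eprop by (auto simp: E'_def)
        ultimately show "e1 = e2" using a 1 2 by auto
      qed
      then show ?thesis by (simp add: sum.reindex)
    qed
    also have "\<dots> \<le> (\<Sum>v\<in>\<gamma>. D v)"
      by (rule sum_mono2[OF assms(4)]) (auto simp: E'_def Dnn)
    finally show ?thesis .
  qed
  have sum_fr: "real d * (\<Sum>v\<in>\<gamma>. D v) \<le> (\<Sum>e\<in>E. D (fr e))"
  proof -
    define Ch where "Ch w = {a. a \<le> d \<and> (w = [] \<or> a \<noteq> hd w)}" for w :: "nat list"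
    define g where "g x = (case x of (w,a) \<Rightarrow> (a # w, w))" for x :: "nat list \<times> nat"
    define S where "S = Sigma \<gamma> Ch"
    have finCh: "finite (Ch w)" for w by (simp add: Ch_def)
    have cardCh: "d \<le> card (Ch w)" for w
    proof (cases w)
      case Nil then have "Ch w = {..d}" by (auto simp: Ch_def)
      then show ?thesis by simp
    next
      case (Cons x xs)
      then have "Ch w = {..d} - {x}" by (auto simp: Ch_def)
      then show ?thesis by (simp add: card_Diff_singleton_if)
    qed
    have gS: "g ` S \<subseteq> E"
    proof
      fix e assume "e \<in> g ` S"
      then obtain w a where wa: "w \<in> \<gamma>" "a \<in> Ch w" "e = (a#w, w)" by (auto simp: S_def g_def)
      have "w \<in> cayley_V d" using wa V by auto
      moreover then have "a # w \<in> cayley_V d" using cons_in_V[of w d a] wa by (auto simp: Ch_def)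
      ultimately show "e \<in> E" using wa by (auto simp: E_def E_gamma_def tree_edges_def tree_adj_def)
    qed
    have injg: "inj_on g S" by (auto simp: inj_on_def g_def)
    have "real d * (\<Sum>v\<in>\<gamma>. D v) = (\<Sum>w\<in>\<gamma>. real d * D w)" by (simp add: sum_distrib_left)
    also have "\<dots> \<le> (\<Sum>w\<in>\<gamma>. real (card (Ch w)) * D w)"
      by (rule sum_mono, rule mult_right_mono) (auto simp: cardCh Dnn)
    also have "\<dots> = (\<Sum>w\<in>\<gamma>. \<Sum>a\<in>Ch w. D w)" by simp
    also have "\<dots> = (\<Sum>x\<in>S. D (fr (g x)))"
      unfolding S_def using assms(4) finCh
      by (subst sum.Sigma) (auto simp: g_def fr_def intro!: sum.cong)
    also have "\<dots> = (\<Sum>e\<in>g ` S. D (fr e))" by (simp add: sum.reindex[OF injg])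
    also have "\<dots> \<le> (\<Sum>e\<in>E. D (fr e))"
      by (rule sum_mono2[OF finE gS]) (simp add: Dnn)
    finally show ?thesis .
  qed
  have "(\<Sum>e\<in>E. T e - A e) \<ge> (\<Sum>e\<in>E. c^2 * D (fr e) - D (to e) - (c+1) * A e)"
    by (rule sum_mono) (use edge in auto)
  also have "(\<Sum>e\<in>E. c^2 * D (fr e) - D (to e) - (c+1) * A e)
      = c^2 * (\<Sum>e\<in>E. D (fr e)) - (\<Sum>e\<in>E. D (to e)) - (c+1) * (\<Sum>e\<in>E. A e)"
    by (simp add: sum_subtractf sum_distrib_left)
  finally have main: "(\<Sum>e\<in>E. T e - A e) \<ge> c^2 * (\<Sum>e\<in>E. D (fr e)) - (\<Sum>e\<in>E. D (to e)) - (c+1) * (\<Sum>e\<in>E. A e)" .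
  have "c^2 * (real d * (\<Sum>v\<in>\<gamma>. D v)) \<le> c^2 * (\<Sum>e\<in>E. D (fr e))"
    using sum_fr by (rule mult_left_mono) simp
  then have "(real d * c^2 - 1) * (\<Sum>v\<in>\<gamma>. D v) - (c+1) * (\<Sum>e\<in>E. A e) \<le> (\<Sum>e\<in>E. T e - A e)"
    using main sum_to by (simp add: algebra_simps)
  moreover have "(\<Sum>e\<in>E. T e - A e) = (\<Sum>(v, w)\<in>E_gamma d \<gamma>.
            \<bar>real_of_int (\<omega> v - \<omega> w)\<bar> powr p - \<bar>real_of_int (\<omega>0 v - \<omega>0 w)\<bar> powr p)"
    unfolding E_def T_def A_def by (intro sum.cong) auto
  moreover have "(\<Sum>e\<in>E. A e) = (\<Sum>(v, w)\<in>E_gamma d \<gamma>. \<bar>real_of_int (\<omega>0 v - \<omega>0 w)\<bar> powr p)"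
    unfolding E_def A_def by (intro sum.cong) auto
  ultimately show ?thesis by (simp add: c_def D_def)
qed

end
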